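(* Let $M\ge 2$, let $\gamma_1,\dots,\gamma_{M-1}$ be nonzero real numbers and $J_1,\dots,J_{M-1}$ real numbers, and consider on the open chain of $M$ sites $$H_{\gamma J}=\sum_{m=1}^{M-1}\Big(J_m c_{m+1}^\dagger c_m\sigma_{m+1}^+ + \text{h.c.}\Big) - \sum_{m=1}^{M-1}\Big(\gamma_m c_{m+1}^\dagger c_m + \text{h.c.}\Big).$$ Then the subspace of states with exactly two fermions and spin on site $1$ equal to $|\uparrow\rangle$ contains at least $2^{M-1}$ linearly independent states $|\Psi\rangle$ with $H_{\gamma J}|\Psi\rangle=0$.
   Context: Each site $m$ carries one spinless fermion mode ($c_m,c_m^\dagger$, canonical anticommutation relations) and one spin-$1/2$ with Pauli matrices $\sigma_m^{x,y,z}$; $\sigma_m^{\pm}=\sigma_m^x\pm i\sigma_m^y$. $H_{\gamma J}$ conserves the total fermion number and does not act on the spin at site $1$. *)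

theory Defs
  imports Complex_Main
begin

text \<open>Basis states of the chain of M sites (sites labelled 1..M):
  a pair (S, U) where S is the set of sites occupied by a fermion and
  U is the set of sites whose spin is up.\<close>

type_synonym state = "nat set \<times> nat set"
type_synonym vec = "state \<Rightarrow> complex"

definition valid_vec :: "nat \<Rightarrow> vec \<Rightarrow> bool" where
  "valid_vec M \<psi> \<longleftrightarrow>
     (\<forall>S U. \<not> (S \<subseteq> {1..M} \<and> U \<subseteq> {1..M}) \<longrightarrow> \<psi> (S, U) = 0)"

text \<open>Jordan-Wigner sign with site ordering 1 < 2 < ... < M.\<close>
definition jw_sign :: "nat set \<Rightarrow> nat \<Rightarrow> complex" where
  "jw_sign S j = (-1) ^ card {k \<in> S. k < j}"

text \<open>Annihilation operator: c_j |T> = sign(T,j) |T - {j}> for j in T, else 0.\<close>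
definition ann :: "nat \<Rightarrow> vec \<Rightarrow> vec" where
  "ann j \<psi> = (\<lambda>(S, U). if j \<notin> S then jw_sign S j * \<psi> (insert j S, U) else 0)"

text \<open>Creation operator: c_j^dagger |T> = sign(T,j) |T + {j}> for j not in T, else 0.\<close>
definition cre :: "nat \<Rightarrow> vec \<Rightarrow> vec" where
  "cre j \<psi> = (\<lambda>(S, U). if j \<in> S then jw_sign S j * \<psi> (S - {j}, U) else 0)"

definition sx :: "nat \<Rightarrow> vec \<Rightarrow> vec" where
  "sx j \<psi> = (\<lambda>(S, U). if j \<in> U then \<psi> (S, U - {j}) else \<psi> (S, insert j U))"

definition sy :: "nat \<Rightarrow> vec \<Rightarrow> vec" where
  "sy j \<psi> = (\<lambda>(S, U). if j \<in> U then - \<i> * \<psi> (S, U - {j}) else \<i> * \<psi> (S, insert j U))"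

definition sz :: "nat \<Rightarrow> vec \<Rightarrow> vec" where
  "sz j \<psi> = (\<lambda>(S, U). if j \<in> U then \<psi> (S, U) else - \<psi> (S, U))"

definition splus :: "nat \<Rightarrow> vec \<Rightarrow> vec" where
  "splus j \<psi> = (\<lambda>b. sx j \<psi> b + \<i> * sy j \<psi> b)"

definition sminus :: "nat \<Rightarrow> vec \<Rightarrow> vec" where
  "sminus j \<psi> = (\<lambda>b. sx j \<psi> b - \<i> * sy j \<psi> b)"

text \<open>The Hermitian conjugate of J_m c_{m+1}^dag c_m sigma^+_{m+1} is
  J_m sigma^-_{m+1} c_m^dag c_{m+1}, and that of gamma_m c_{m+1}^dag c_m is
  gamma_m c_m^dag c_{m+1} (J_m, gamma_m real).\<close>
definition H_gJ :: "nat \<Rightarrow> (nat \<Rightarrow> real) \<Rightarrow> (nat \<Rightarrow> real) \<Rightarrow> vec \<Rightarrow> vec" where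
  "H_gJ M \<gamma> J \<psi> = (\<lambda>b.
     (\<Sum>m\<in>{1..M-1}.
        complex_of_real (J m) * cre (m+1) (ann m (splus (m+1) \<psi>)) b
      + complex_of_real (J m) * sminus (m+1) (cre m (ann (m+1) \<psi>)) b)
   - (\<Sum>m\<in>{1..M-1}.
        complex_of_real (\<gamma> m) * cre (m+1) (ann m \<psi>) b
      + complex_of_real (\<gamma> m) * cre m (ann (m+1) \<psi>) b))"

definition two_fermion_up1 :: "nat \<Rightarrow> vec \<Rightarrow> bool" where
  "two_fermion_up1 M \<psi> \<longleftrightarrow> valid_vec M \<psi> \<and>
     (\<forall>S U. \<psi> (S, U) \<noteq> 0 \<longrightarrow> card S = 2 \<and> 1 \<in> U)"

end

theory Submission
  imports Defs
begin


lemma splus_eq: "splus s Y (T,U) = (if s \<in> U then 2 * Y (T, U - {s}) else 0)"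
  by (simp add: splus_def sx_def sy_def)

lemma sminus_eq: "sminus s Y (T,U) = (if s \<notin> U then 2 * Y (T, insert s U) else 0)"
  by (simp add: sminus_def sx_def sy_def)

definition adj_supp :: "vec \<Rightarrow> bool" where
  "adj_supp Y \<longleftrightarrow> (\<forall>T U. Y (T,U) \<noteq> 0 \<longrightarrow> (\<exists>k\<ge>1. T = {k, Suc k}))"

lemma hopR:
  assumes "adj_supp Y"
  shows "cre (Suc m) (ann m Y) (S,U) = (if m \<ge> 2 \<and> S = {m-1, Suc m} then Y ({m-1,m},U) else 0)"
proof (cases "m \<ge> 2 \<and> S = {m-1, Suc m}")
  case True
  then have a: "{k \<in> S. k < Suc m} = {m-1}" by auto
  have b: "S - {Suc m} = {m-1}" using True by auto
  have c: "{k \<in> {m-1}. k < m} = {m-1}" using True by auto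
  have d: "insert m {m-1} = {m-1,m}" by auto
  have e: "m \<notin> S - {Suc m}" "Suc m \<in> S" using True by auto
  have "cre (Suc m) (ann m Y) (S,U) = jw_sign S (Suc m) * (jw_sign (S - {Suc m}) m * Y (insert m (S - {Suc m}), U))"
    unfolding cre_def ann_def using e by simp
  also have "\<dots> = Y ({m-1,m},U)" unfolding jw_sign_def a b c d by simp
  finally show ?thesis using True by simp
next
  case False
  have "Y (insert m (S - {Suc m}), U) = 0" if "Suc m \<in> S" "m \<notin> S"
  proof (rule ccontr)
    assume "Y (insert m (S - {Suc m}), U) \<noteq> 0"
    then obtain k where k: "k \<ge> 1" "insert m (S - {Suc m}) = {k, Suc k}"
      using assms unfolding adj_supp_def by blast
    have k2: "\<And>x. (x = m \<or> (x \<in> S \<and> x \<noteq> Suc m)) \<longleftrightarrow> (x = k \<or> x = Suc k)"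
      using k(2) unfolding set_eq_iff by simp
    have "m \<noteq> k" using k2[of "Suc k"] by auto
    then have "m = Suc k" using k2[of m] by simp
    have "S = {k, Suc m}"
    proof (rule set_eqI)
      fix x show "x \<in> S \<longleftrightarrow> x \<in> {k, Suc m}"
        using k2[of x] that \<open>m = Suc k\<close> by auto
    qed
    then show False using False \<open>m = Suc k\<close> k by auto
  qed
  then have Yz: "Suc m \<in> S \<and> m \<notin> S \<Longrightarrow> Y (insert m (S - {Suc m}), U) = 0" by blast
  have eq: "cre (Suc m) (ann m Y) (S,U) = (if Suc m \<in> S \<and> m \<notin> S then jw_sign S (Suc m) * (jw_sign (S - {Suc m}) m * Y (insert m (S - {Suc m}), U)) else 0)"
    by (simp add: cre_def ann_def)
  show ?thesis
  proof (cases "Suc m \<in> S \<and> m \<notin> S")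
    case True then show ?thesis unfolding eq if_not_P[OF False] using Yz by simp
  next
    case F2: False then show ?thesis unfolding eq if_not_P[OF False] if_not_P[OF F2] by simp
  qed
qed

lemma hopL:
  assumes "adj_supp Y"
  shows "cre m (ann (Suc m) Y) (S,U) = (if S = {m, Suc (Suc m)} then Y ({Suc m, Suc (Suc m)},U) else 0)"
proof (cases "S = {m, Suc (Suc m)}")
  case True
  then have a: "{k \<in> S. k < m} = {}" by auto
  have b: "S - {m} = {Suc (Suc m)}" using True by auto
  have c: "{k \<in> {Suc (Suc m)}. k < Suc m} = {}" by auto
  have d: "insert (Suc m) {Suc (Suc m)} = {Suc m, Suc (Suc m)}" by auto
  have e: "Suc m \<notin> S - {m}" "m \<in> S" using True by auto
  have "cre m (ann (Suc m) Y) (S,U) = jw_sign S m * (jw_sign (S - {m}) (Suc m) * Y (insert (Suc m) (S - {m}), U))"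
    unfolding cre_def ann_def using e by simp
  also have "\<dots> = Y ({Suc m, Suc (Suc m)},U)" unfolding jw_sign_def a b c by simp
  finally show ?thesis using True by simp
next
  case False
  have "Y (insert (Suc m) (S - {m}), U) = 0" if "m \<in> S" "Suc m \<notin> S"
  proof (rule ccontr)
    assume "Y (insert (Suc m) (S - {m}), U) \<noteq> 0"
    then obtain k where k: "k \<ge> 1" "insert (Suc m) (S - {m}) = {k, Suc k}"
      using assms unfolding adj_supp_def by blast
    have k2: "\<And>x. (x = Suc m \<or> (x \<in> S \<and> x \<noteq> m)) \<longleftrightarrow> (x = k \<or> x = Suc k)"
      using k(2) unfolding set_eq_iff by simp
    have "m \<noteq> k" using k2[of "m"] by simp
    then have "Suc m = k" using k2[of "Suc m"] by simp
    have "S = {m, Suc (Suc m)}"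
    proof (rule set_eqI)
      fix x show "x \<in> S \<longleftrightarrow> x \<in> {m, Suc (Suc m)}"
      proof -
        have "x \<in> S \<longleftrightarrow> (x \<noteq> m \<longrightarrow> x = Suc m \<or> x = Suc (Suc m)) \<and> x \<noteq> Suc m" 
          using k2[of x] that \<open>Suc m = k\<close> by blast
        then show ?thesis using that by auto
      qed
    qed
    then show False using False by auto
  qed
  then have Yz: "m \<in> S \<and> Suc m \<notin> S \<Longrightarrow> Y (insert (Suc m) (S - {m}), U) = 0" by blast
  have eq: "cre m (ann (Suc m) Y) (S,U) = (if m \<in> S \<and> Suc m \<notin> S then jw_sign S m * (jw_sign (S - {m}) (Suc m) * Y (insert (Suc m) (S - {m}), U)) else 0)"
    by (simp add: cre_def ann_def)
  show ?thesis
  proof (cases "m \<in> S \<and> Suc m \<notin> S")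
    case True then show ?thesis unfolding eq if_not_P[OF False] using Yz by simp
  next
    case F2: False then show ?thesis unfolding eq if_not_P[OF False] if_not_P[OF F2] by simp
  qed
qed



definition Rop :: "real \<Rightarrow> real \<Rightarrow> nat \<Rightarrow> (nat set \<Rightarrow> complex) \<Rightarrow> nat set \<Rightarrow> complex" where
  "Rop g j s f U = complex_of_real j * (if s \<in> U then 2 * f (U - {s}) else 0) - complex_of_real g * f U"

definition Lop :: "real \<Rightarrow> real \<Rightarrow> nat \<Rightarrow> (nat set \<Rightarrow> complex) \<Rightarrow> nat set \<Rightarrow> complex" where
  "Lop g j s f U = complex_of_real j * (if s \<notin> U then 2 * f (insert s U) else 0) - complex_of_real g * f U"

definition Linv :: "real \<Rightarrow> real \<Rightarrow> nat \<Rightarrow> (nat set \<Rightarrow> complex) \<Rightarrow> nat set \<Rightarrow> complex" where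
  "Linv g j s f U = - f U / complex_of_real g
     - complex_of_real j / (complex_of_real g)^2 * (if s \<notin> U then 2 * f (insert s U) else 0)"

lemma Lop_Linv: "g \<noteq> 0 \<Longrightarrow> Lop g j s (Linv g j s f) U = f U"
  unfolding Lop_def Linv_def by (simp add: field_simps power2_eq_square)

fun ch :: "(nat \<Rightarrow> real) \<Rightarrow> (nat \<Rightarrow> real) \<Rightarrow> nat set \<Rightarrow> nat \<Rightarrow> nat set \<Rightarrow> complex" where
  "ch g j U0 0 = (\<lambda>U. if U = U0 then 1 else 0)"
| "ch g j U0 (Suc n) = Linv (g (Suc n)) (j (Suc n)) (Suc (Suc n))
      (\<lambda>U. - Rop (g (Suc (Suc n))) (j (Suc (Suc n))) (Suc (Suc (Suc n))) (ch g j U0 n) U)"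

lemma ch_supp:
  assumes "1 \<in> U0"
  shows "ch g j U0 n U \<noteq> 0 \<Longrightarrow> 1 \<in> U \<and> U \<subseteq> U0 \<union> {2..n+2}"
proof (induction n arbitrary: U)
  case 0
  then show ?case using assms by (auto split: if_splits)
next
  case (Suc n)
  let ?f = "ch g j U0 n"
  have R: "1 \<in> V \<and> V \<subseteq> U0 \<union> {2..n+3}" 
    if "Rop (g (Suc (Suc n))) (j (Suc (Suc n))) (Suc (Suc (Suc n))) ?f V \<noteq> 0" for V
  proof -
    have "(Suc (Suc (Suc n)) \<in> V \<and> ?f (V - {Suc (Suc (Suc n))}) \<noteq> 0) \<or> ?f V \<noteq> 0"
      using that unfolding Rop_def by (auto split: if_splits)
    then show ?thesis
    proof
      assume a: "Suc (Suc (Suc n)) \<in> V \<and> ?f (V - {Suc (Suc (Suc n))}) \<noteq> 0"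
      then have "1 \<in> V - {Suc (Suc (Suc n))} \<and> V - {Suc (Suc (Suc n))} \<subseteq> U0 \<union> {2..n+2}"
        using Suc.IH by blast
      then show ?thesis using a by auto
    next
      assume "?f V \<noteq> 0"
      then show ?thesis using Suc.IH[of V] by auto
    qed
  qed
  have "(Suc (Suc n) \<notin> U \<and> Rop (g (Suc (Suc n))) (j (Suc (Suc n))) (Suc (Suc (Suc n))) ?f (insert (Suc (Suc n)) U) \<noteq> 0)
        \<or> Rop (g (Suc (Suc n))) (j (Suc (Suc n))) (Suc (Suc (Suc n))) ?f U \<noteq> 0"
    using Suc.prems unfolding ch.simps Linv_def by (auto split: if_splits)
  then show ?case
  proof
    assume a: "Suc (Suc n) \<notin> U \<and> Rop (g (Suc (Suc n))) (j (Suc (Suc n))) (Suc (Suc (Suc n))) ?f (insert (Suc (Suc n)) U) \<noteq> 0"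
    then have "1 \<in> insert (Suc (Suc n)) U \<and> insert (Suc (Suc n)) U \<subseteq> U0 \<union> {2..n+3}" using R by blast
    then show ?thesis by auto
  next
    assume "Rop (g (Suc (Suc n))) (j (Suc (Suc n))) (Suc (Suc (Suc n))) ?f U \<noteq> 0"
    then have "1 \<in> U \<and> U \<subseteq> U0 \<union> {2..n+3}" by (rule R)
    then show ?thesis by (simp add: numeral_eq_Suc)
  qed
qed

definition Psi :: "nat \<Rightarrow> (nat \<Rightarrow> real) \<Rightarrow> (nat \<Rightarrow> real) \<Rightarrow> nat set \<Rightarrow> vec" where
  "Psi M g j U0 = (\<lambda>(S,U). if (\<exists>k. 1 \<le> k \<and> k < M \<and> S = {k, Suc k}) then ch g j U0 (Min S - 1) U else 0)"

lemma pair_eq: "{a, Suc a} = {b, Suc (b::nat)} \<longleftrightarrow> a = b"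
  by (auto simp: doubleton_eq_iff)

lemma pair2_eq: "{a, Suc (Suc a)} = {b, Suc (Suc (b::nat))} \<longleftrightarrow> a = b"
  by (auto simp: doubleton_eq_iff)

lemma Psi_pair: "Psi M g j U0 ({k, Suc k}, U) = (if 1 \<le> k \<and> k < M then ch g j U0 (k - 1) U else 0)"
proof -
  have "Min {k, Suc k} = k" by simp
  then show ?thesis unfolding Psi_def using pair_eq by auto
qed

lemma Psi_supp: "Psi M g j U0 (S, U) \<noteq> 0 \<Longrightarrow> \<exists>k. 1 \<le> k \<and> k < M \<and> S = {k, Suc k}"
  unfolding Psi_def by (auto split: if_splits)

lemma enc_inj:
  fixes i i' :: nat
  assumes "i < 2^(M-1)" "i' < 2^(M-1)"
    and "insert 1 {j. 2 \<le> j \<and> j \<le> M \<and> bit i (j-2)} = insert 1 {j. 2 \<le> j \<and> j \<le> M \<and> bit i' (j-2)}"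
  shows "i = i'"
proof (rule bit_eqI)
  fix n
  show "bit i n \<longleftrightarrow> bit i' n"
  proof (cases "n < M - 1")
    case True
    let ?A = "insert 1 {j. 2 \<le> j \<and> j \<le> M \<and> bit i (j-2)}"
    let ?B = "insert 1 {j. 2 \<le> j \<and> j \<le> M \<and> bit i' (j-2)}"
    have e1: "n + 2 \<in> ?A \<longleftrightarrow> bit i n" using True by auto
    have e2: "n + 2 \<in> ?B \<longleftrightarrow> bit i' n" using True by auto
    have "n + 2 \<in> ?A \<longleftrightarrow> n + 2 \<in> ?B" by (simp only: assms(3))
    then show ?thesis using e1 e2 by blast
  next
    case False
    have p: "(2::nat)^(M-1) \<le> 2^n" using False by (intro power_increasing) auto
    have "i div 2^n = 0" using less_le_trans[OF assms(1) p] by simp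
    then have "\<not> bit i n" unfolding bit_iff_odd by simp
    moreover have "i' div 2^n = 0" using less_le_trans[OF assms(2) p] by simp
    then have "\<not> bit i' n" unfolding bit_iff_odd by simp
    ultimately show ?thesis by simp
  qed
qed



lemma H_zero:
  assumes g: "\<forall>m\<in>{1..M-1}. \<gamma> m \<noteq> 0"
  shows "H_gJ M \<gamma> J (Psi M \<gamma> J U0) (S,U) = 0"
proof -
  let ?P = "Psi M \<gamma> J U0"
  have aP: "adj_supp ?P" unfolding adj_supp_def using Psi_supp by blast
  have aS: "adj_supp (splus s ?P)" for s
    unfolding adj_supp_def splus_eq using Psi_supp by (metis mult_zero_right)
  define h where "h m = complex_of_real (J m) * (if m\<ge>2 \<and> S={m-1,Suc m} then (if Suc m \<in> U then 2*?P({m-1,m},U-{Suc m}) else 0) else 0)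
     + complex_of_real (J m) * (if Suc m \<notin> U then 2 * (if S = {m, Suc(Suc m)} then ?P({Suc m,Suc(Suc m)}, insert (Suc m) U) else 0) else 0)
     - (complex_of_real (\<gamma> m) * (if m\<ge>2 \<and> S={m-1,Suc m} then ?P({m-1,m},U) else 0)
      + complex_of_real (\<gamma> m) * (if S = {m,Suc(Suc m)} then ?P({Suc m,Suc(Suc m)},U) else 0))" for m
  have H: "H_gJ M \<gamma> J ?P (S,U) = (\<Sum>m\<in>{1..M-1}. h m)"
    unfolding H_gJ_def sum_subtractf[symmetric]
    by (rule sum.cong[OF refl]) (simp add: h_def hopR[OF aS] hopR[OF aP] hopL[OF aP] sminus_eq splus_eq)
  show ?thesis
  proof (cases "\<exists>p\<ge>1. S = {p, Suc (Suc p)}")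
    case False
    have "h m = 0" if "m \<in> {1..M-1}" for m
    proof -
      have c1: "\<not> (m\<ge>2 \<and> S={m-1,Suc m})"
      proof
        assume a: "m\<ge>2 \<and> S={m-1,Suc m}"
        then have "S = {m-1, Suc (Suc (m-1))}" "m - 1 \<ge> 1" by (auto simp: Suc_diff_Suc numeral_eq_Suc)
        then show False using False by blast
      qed
      have c2: "S \<noteq> {m, Suc (Suc m)}" using False that by auto
      show ?thesis unfolding h_def if_not_P[OF c1] if_not_P[OF c2] by simp
    qed
    then show ?thesis unfolding H by simp
  next
    case True
    then obtain p where p: "p \<ge> 1" "S = {p, Suc (Suc p)}" by blast
    have c1: "(m\<ge>2 \<and> S={m-1,Suc m}) \<longleftrightarrow> m = Suc p" for m
    proof (cases "m \<ge> 2")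
      case True
      then have "{m-1,Suc m} = {m-1, Suc (Suc (m-1))}" by (auto simp: numeral_eq_Suc)
      then have "S={m-1,Suc m} \<longleftrightarrow> m - 1 = p" using p pair2_eq by metis
      then show ?thesis using True by auto
    next
      case False then show ?thesis using p by auto
    qed
    have c2: "S = {m, Suc (Suc m)} \<longleftrightarrow> m = p" for m using p pair2_eq by metis
    have hm: "h m = (if m = Suc p then h (Suc p) else 0) + (if m = p then h p else 0)" for m
      unfolding h_def c1 c2 by auto
    have "(\<Sum>m\<in>{1..M-1}. h m) = (if Suc p \<in> {1..M-1} then h (Suc p) else 0) + (if p \<in> {1..M-1} then h p else 0)"
      by (subst hm) (simp add: sum.distrib)
    also have "\<dots> = 0"
    proof -
      have hS: "h (Suc p) = Rop (\<gamma> (Suc p)) (J (Suc p)) (Suc (Suc p)) (\<lambda>V. ?P ({p, Suc p}, V)) U"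
        unfolding h_def c1 c2 Rop_def by simp
      have hp: "h p = Lop (\<gamma> p) (J p) (Suc p) (\<lambda>V. ?P ({Suc p, Suc (Suc p)}, V)) U"
        unfolding h_def c1 c2 Lop_def by simp
      show ?thesis
      proof (cases "Suc p \<le> M - 1")
        case True
        have pM: "p < M" "Suc p < M" using True by auto
        have e1: "(\<lambda>V. ?P ({p, Suc p}, V)) = ch \<gamma> J U0 (p - 1)"
          using pM p by (simp add: Psi_pair fun_eq_iff)
        have e2: "(\<lambda>V. ?P ({Suc p, Suc (Suc p)}, V)) = ch \<gamma> J U0 p"
          using pM p by (simp add: Psi_pair fun_eq_iff)
        have pp: "p = Suc (p - 1)" using p by simp
        have gp: "\<gamma> p \<noteq> 0" using g True p by auto
        have "ch \<gamma> J U0 p = Linv (\<gamma> p) (J p) (Suc p)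
           (\<lambda>U. - Rop (\<gamma> (Suc p)) (J (Suc p)) (Suc (Suc p)) (ch \<gamma> J U0 (p-1)) U)"
          using p(1) by (cases p) simp_all
        then have "h p = - h (Suc p)" unfolding hp hS e1 e2 using Lop_Linv[OF gp] by simp
        then show ?thesis using True p by simp
      next
        case False
        have "h p = 0" if "p \<in> {1..M-1}"
        proof -
          have "(\<lambda>V. ?P ({Suc p, Suc (Suc p)}, V)) = (\<lambda>V. 0)"
          proof -
            have "\<not> Suc p < M" using False by simp
            then show ?thesis by (simp add: Psi_pair fun_eq_iff)
          qed
          then show ?thesis unfolding hp Lop_def fun_eq_iff by simp
        qed
        then show ?thesis using False by simp
      qed
    qed
    finally show ?thesis unfolding H .
  qed
qed



theorem mainTheorem4:
  fixes M :: nat and \<gamma> J :: "nat \<Rightarrow> real"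
  assumes "M \<ge> 2"
    and "\<forall>m\<in>{1..M-1}. \<gamma> m \<noteq> 0"
  shows "\<exists>\<Psi> :: nat \<Rightarrow> vec.
           (\<forall>i<2^(M-1). two_fermion_up1 M (\<Psi> i) \<and> H_gJ M \<gamma> J (\<Psi> i) = (\<lambda>_. 0))
         \<and> (\<forall>a :: nat \<Rightarrow> complex.
              (\<lambda>b. \<Sum>i<2^(M-1). a i * \<Psi> i b) = (\<lambda>_. 0) \<longrightarrow> (\<forall>i<2^(M-1). a i = 0))"
proof -
  define enc where "enc i = insert 1 {j. 2 \<le> j \<and> j \<le> M \<and> bit i (j-2)}" for i :: nat
  define Q where "Q i = Psi M \<gamma> J (enc i)" for i
  have encM: "1 \<in> enc i" "enc i \<subseteq> {1..M}" for i unfolding enc_def using assms(1) by auto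
  have tf: "two_fermion_up1 M (Q i)" for i
    unfolding two_fermion_up1_def valid_vec_def
  proof (intro conjI allI impI)
    fix S U assume nz: "Q i (S, U) \<noteq> 0"
    then obtain k where k: "1 \<le> k" "k < M" "S = {k, Suc k}" unfolding Q_def using Psi_supp by blast
    then have "ch \<gamma> J (enc i) (k - 1) U \<noteq> 0" using nz unfolding Q_def by (simp add: Psi_pair)
    then have "1 \<in> U \<and> U \<subseteq> enc i \<union> {2..k-1+2}" using ch_supp encM(1) by blast
    moreover have "enc i \<union> {2..k-1+2} \<subseteq> {1..M}" using encM(2) k by auto
    ultimately show "card S = 2" "1 \<in> U" using k by auto
  next
    fix S U assume nv: "\<not> (S \<subseteq> {1..M} \<and> U \<subseteq> {1..M})"
    show "Q i (S, U) = 0"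
    proof (rule ccontr)
      assume nz: "Q i (S, U) \<noteq> 0"
      then obtain k where k: "1 \<le> k" "k < M" "S = {k, Suc k}" unfolding Q_def using Psi_supp by blast
      then have "ch \<gamma> J (enc i) (k - 1) U \<noteq> 0" using nz unfolding Q_def by (simp add: Psi_pair)
      then have "1 \<in> U \<and> U \<subseteq> enc i \<union> {2..k-1+2}" using ch_supp encM(1) by blast
      moreover have "enc i \<union> {2..k-1+2} \<subseteq> {1..M}" using encM(2) k by auto
      ultimately show False using k nv by auto
    qed
  qed
  have hz: "H_gJ M \<gamma> J (Q i) = (\<lambda>_. 0)" for i
  proof
    fix b :: state
    obtain S U where "b = (S, U)" by (cases b)
    then show "H_gJ M \<gamma> J (Q i) b = 0" unfolding Q_def using H_zero[OF assms(2)] by simp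
  qed
  have ind: "\<forall>i<2^(M-1). a i = 0" if eq: "(\<lambda>b. \<Sum>i<2^(M-1). a i * Q i b) = (\<lambda>_. 0)" for a
  proof (intro allI impI)
    fix j :: nat assume j: "j < 2^(M-1)"
    have M1: "1 < M" using assms(1) by simp
    have q: "Q i ({1, Suc 1}, enc j) = (if enc j = enc i then 1 else 0)" for i
      unfolding Q_def using M1 by (simp add: Psi_pair)
    have r: "a i * Q i ({1, Suc 1}, enc j) = (if i = j then a i else 0)" if "i < 2^(M-1)" for i
    proof -
      have "enc j = enc i \<longleftrightarrow> i = j" using enc_inj[OF that j] unfolding enc_def by auto
      then show ?thesis unfolding q by simp
    qed
    have "0 = (\<Sum>i<2^(M-1). a i * Q i ({1, Suc 1}, enc j))" using fun_cong[OF eq, of "({1, Suc 1}, enc j)"] by simp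
    also have "\<dots> = (\<Sum>i<2^(M-1). if i = j then a i else 0)" by (rule sum.cong[OF refl]) (rule r, simp)
    also have "\<dots> = a j" using j by simp
    finally show "a j = 0" by simp
  qed
  show ?thesis
    by (rule exI[of _ Q]) (use tf hz ind in blast)
qed


end
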